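(* Let $\mathcal{X}\subset\mathbb{R}^n$ be closed and convex, $\Xi\subset\mathbb{R}^m$ closed and convex, $\beta\in(0,1)$, $\varphi:\mathcal{X}\times\mathcal{X}\times\Xi\to\mathbb{R}$ bounded and continuous, and $\mathcal{Y}:\mathcal{X}\times\Xi\rightrightarrows\mathcal{X}$ nonempty-valued, compact-valued and continuous. Let $\xi_1,\ldots,\xi_N\in\Xi$ and $\mu_N=\frac1N\sum_{i=1}^N\xi_i$. Let $\mathcal{P}$ be a set of probability distributions on $\Xi$ such that $\mathbb{E}_Q[\boldsymbol{\xi}]=\mu_N$ for every $Q\in\mathcal{P}$ and the point mass $\delta_{\mu_N}\in\mathcal{P}$. If the MPC Bellman operator $B_{\mathrm{M}}$ is concavity preserving, then the DRO functional equation $$v_{\mathrm{R}}(x,\xi)=\inf_{y\in\mathcal{Y}(x,\xi)}\Bigl\{\varphi(x,y,\xi)+\beta\sup_{Q\in\mathcal{P}}\mathbb{E}_Q[v_{\mathrm{R}}(y,\boldsymbol{\xi})]\Bigr\}\quad\forall(x,\xi)\in\mathcal{X}\times\Xi$$ has a solution which is the same as the (unique bounded continuous) solution $v_{\mathrm{M}}$ of the MPC functional equation $$v_{\mathrm{M}}(x,\xi)=\inf_{y\in\mathcal{Y}(x,\xi)}\bigl\{\varphi(x,y,\xi)+\beta v_{\mathrm{M}}(y,\mu_N)\bigr\}\quad\forall(x,\xi)\in\mathcal{X}\times\Xi.$$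
   Context: $C_b(\mathcal{X}\times\Xi)$ denotes the Banach space of bounded continuous real-valued functions on $\mathcal{X}\times\Xi$ with the sup norm. The MPC Bellman operator $B_{\mathrm{M}}:C_b(\mathcal{X}\times\Xi)\to C_b(\mathcal{X}\times\Xi)$ is $B_{\mathrm{M}}(f)(x,\xi)=\inf_{y\in\mathcal{Y}(x,\xi)}\{\varphi(x,y,\xi)+\beta f(y,\mu_N)\}$. $B_{\mathrm{M}}$ is called concavity preserving if there exists a closed subset $\mathcal{F}\subset C_b(\mathcal{X}\times\Xi)$ such that $\xi\mapsto f(x,\xi)$ is concave for every $x\in\mathcal{X}$ and $f\in\mathcal{F}$, and $B_{\mathrm{M}}(\mathcal{F})\subset\mathcal{F}$. *)

theory Defs
  imports "HOL-Analysis.Analysis" "HOL-Probability.Probability"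
begin

text \<open>C_b(X x Xi): bounded continuous real functions on the set D, represented
  by HOL functions (only their values on D matter).\<close>
definition Cb :: "('a::metric_space) set \<Rightarrow> ('a \<Rightarrow> real) set" where
  "Cb D = {f. continuous_on D f \<and> bounded (f ` D)}"

definition closed_Cb :: "('a::metric_space) set \<Rightarrow> ('a \<Rightarrow> real) set \<Rightarrow> bool" where
  "closed_Cb D F \<longleftrightarrow> F \<subseteq> Cb D \<and>
     (\<forall>fs f. (\<forall>k. fs k \<in> F) \<longrightarrow> f \<in> Cb D \<longrightarrow> uniform_limit D fs f sequentially \<longrightarrow> f \<in> F)"

definition uhc_on :: "('a::metric_space) set \<Rightarrow> ('a \<Rightarrow> ('b::topological_space) set) \<Rightarrow> bool" where
  "uhc_on D Y \<longleftrightarrow> (\<forall>p\<in>D. \<forall>U. open U \<longrightarrow> Y p \<subseteq> U \<longrightarrow>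
       (\<exists>e>0. \<forall>q\<in>D. dist q p < e \<longrightarrow> Y q \<subseteq> U))"

definition lhc_on :: "('a::metric_space) set \<Rightarrow> ('a \<Rightarrow> ('b::topological_space) set) \<Rightarrow> bool" where
  "lhc_on D Y \<longleftrightarrow> (\<forall>p\<in>D. \<forall>U. open U \<longrightarrow> Y p \<inter> U \<noteq> {} \<longrightarrow>
       (\<exists>e>0. \<forall>q\<in>D. dist q p < e \<longrightarrow> Y q \<inter> U \<noteq> {}))"

definition continuous_corr_on :: "('a::metric_space) set \<Rightarrow> ('a \<Rightarrow> ('b::topological_space) set) \<Rightarrow> bool" where
  "continuous_corr_on D Y \<longleftrightarrow> uhc_on D Y \<and> lhc_on D Y"

definition BM :: "('a \<Rightarrow> 'a \<Rightarrow> 'b \<Rightarrow> real) \<Rightarrow> ('a \<Rightarrow> 'b \<Rightarrow> 'a set) \<Rightarrow> real \<Rightarrow> 'b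
                   \<Rightarrow> ('a \<times> 'b \<Rightarrow> real) \<Rightarrow> ('a \<times> 'b \<Rightarrow> real)" where
  "BM \<phi> Y \<beta> \<mu> f = (\<lambda>(x, \<xi>). INF y\<in>Y x \<xi>. \<phi> x y \<xi> + \<beta> * f (y, \<mu>))"

text \<open>Concavity preservation: there is a (nonempty) closed subset F of C_b(X x Xi)
  of functions concave in the second argument, mapped into itself by BM
  (BM f is identified with any representative agreeing with it on X x Xi).\<close>
definition concavity_preserving ::
  "'a::euclidean_space set \<Rightarrow> 'b::euclidean_space set \<Rightarrow> ('a \<Rightarrow> 'a \<Rightarrow> 'b \<Rightarrow> real)
   \<Rightarrow> ('a \<Rightarrow> 'b \<Rightarrow> 'a set) \<Rightarrow> real \<Rightarrow> 'b \<Rightarrow> bool" where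
  "concavity_preserving X Xi \<phi> Y \<beta> \<mu> \<longleftrightarrow>
     (\<exists>F. F \<noteq> {} \<and> closed_Cb (X \<times> Xi) F \<and>
        (\<forall>f\<in>F. \<forall>x\<in>X. concave_on Xi (\<lambda>\<xi>. f (x, \<xi>))) \<and>
        (\<forall>f\<in>F. \<exists>g\<in>F. \<forall>p\<in>X \<times> Xi. g p = BM \<phi> Y \<beta> \<mu> f p))"

text \<open>Probability distributions on Xi: Borel probability measures on the ambient
  space giving full mass to Xi.\<close>
definition prob_on :: "'b::euclidean_space set \<Rightarrow> 'b measure \<Rightarrow> bool" where
  "prob_on Xi Q \<longleftrightarrow> prob_space Q \<and> sets Q = sets borel \<and> emeasure Q Xi = 1"

end

theory Submission
  imports Defs
begin

lemma jensen_concave: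
  fixes f :: "'b::euclidean_space \<Rightarrow> real" and Q :: "'b measure"
  assumes Xi: "closed Xi" "convex Xi"
    and fc: "continuous_on Xi f" and fb: "bounded (f ` Xi)"
    and conc: "concave_on Xi f" and mu: "\<mu> \<in> Xi"
    and Qp: "prob_on Xi Q"
    and Qi: "integrable Q (\<lambda>\<xi>. \<xi>)" and Qm: "(\<integral>\<xi>. \<xi> \<partial>Q) = \<mu>"
  shows "(LINT \<zeta>:Xi|Q. f \<zeta>) \<le> f \<mu>"
proof (rule field_le_epsilon)
  fix e :: real assume e: "0 < e"
  have ps: "prob_space Q" and sQ: "sets Q = sets borel" and QXi: "emeasure Q Xi = 1"
    using Qp by (auto simp: prob_on_def)
  interpret prob_space Q by fact
  define H where "H = {z \<in> Xi \<times> UNIV. snd z \<le> f (fst z)}"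
  have cH: "closed H" unfolding H_def
    by (intro continuous_on_closed_Collect_le closed_Times Xi(1) closed_UNIV continuous_on_snd
          continuous_on_compose2[OF fc continuous_on_fst]) auto
  have vH: "convex H" unfolding H_def convex_alt
  proof (clarsimp)
    fix a b c d u :: real
    fix a :: 'b and b :: real and c :: 'b and d :: real
    assume h: "a \<in> Xi" "b \<le> f a" "c \<in> Xi" "d \<le> f c" "0 \<le> u" "u \<le> 1"
    have m: "(1 - u) *\<^sub>R a + u *\<^sub>R c \<in> Xi" using Xi(2) h unfolding convex_alt by blast
    have c1: "(1 - u) * b \<le> (1 - u) * f a" using h by (intro mult_left_mono) auto
    have c2: "u * d \<le> u * f c" using h by (intro mult_left_mono) auto
    have c3: "(1 - u) * f a + u * f c \<le> f ((1 - u) *\<^sub>R a + u *\<^sub>R c)"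
      using concave_onD[OF conc, of u a c] h by blast
    show "(1 - u) *\<^sub>R a + u *\<^sub>R c \<in> Xi \<and> (1 - u) * b + u * d \<le> f ((1 - u) *\<^sub>R a + u *\<^sub>R c)"
      using m c1 c2 c3 by linarith
  qed
  have nH: "(\<mu>, f \<mu> + e) \<notin> H" using e by (auto simp: H_def)
  obtain a c where ac: "inner a (\<mu>, f \<mu> + e) < c" "\<forall>z\<in>H. inner a z > c"
    using separating_hyperplane_closed_point[OF vH cH nH] by blast
  obtain a1 b where a: "a = (a1, b)" by (cases a)
  have "(\<mu>, f \<mu>) \<in> H" using mu by (auto simp: H_def)
  then have "c < inner a1 \<mu> + b * f \<mu>" using ac a by auto
  moreover have "inner a1 \<mu> + b * (f \<mu> + e) < c" using ac a by auto
  ultimately have "b * e < 0" by (simp add: algebra_simps)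
  then have b: "b < 0" using e by (simp add: mult_less_0_iff)
  define L where "L \<zeta> = (c - inner a1 \<zeta>) / b" for \<zeta>
  have fL: "f \<zeta> \<le> L \<zeta>" if "\<zeta> \<in> Xi" for \<zeta>
  proof -
    have "(\<zeta>, f \<zeta>) \<in> H" using that by (auto simp: H_def)
    with ac a have "inner a1 \<zeta> + b * f \<zeta> > c" by auto
    with b show ?thesis unfolding L_def by (simp add: field_simps)
  qed
  have Lmu: "L \<mu> < f \<mu> + e"
    using ac a b unfolding L_def by (simp add: field_simps)
  have XiB: "Xi \<in> sets Q" using sQ Xi(1) by simp
  have AE: "AE \<zeta> in Q. \<zeta> \<in> Xi"
    using AE_prob_1[of Xi] QXi XiB by (simp add: emeasure_eq_measure)
  obtain K where K: "\<forall>\<zeta>\<in>Xi. \<bar>f \<zeta>\<bar> \<le> K" using fb by (auto simp: bounded_iff)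
  have m0: "(\<lambda>\<zeta>. indicator Xi \<zeta> *\<^sub>R f \<zeta>) \<in> borel_measurable borel"
    using borel_measurable_continuous_on_indicator[OF _ fc] Xi(1) by simp
  have meas: "(\<lambda>\<zeta>. indicator Xi \<zeta> *\<^sub>R f \<zeta>) \<in> borel_measurable Q"
    unfolding measurable_cong_sets[OF sQ refl] by (rule m0)
  have int1: "integrable Q (\<lambda>\<zeta>. indicator Xi \<zeta> *\<^sub>R f \<zeta>)"
  proof -
    have "\<bar>f \<mu>\<bar> \<le> K" using K mu by blast
    then have Kp: "0 \<le> K" using abs_ge_zero order_trans by blast
    show ?thesis
      by (rule integrable_const_bound[where B=K]) (use K meas Kp in \<open>auto simp: indicator_def\<close>)
  qed
  have int2: "integrable Q L" unfolding L_def
    using Qi by (intro integrable_divide integrable_diff) auto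
  have "(LINT \<zeta>:Xi|Q. f \<zeta>) = (\<integral>\<zeta>. indicator Xi \<zeta> *\<^sub>R f \<zeta> \<partial>Q)"
    by (simp add: set_lebesgue_integral_def)
  also have "\<dots> \<le> (\<integral>\<zeta>. L \<zeta> \<partial>Q)"
    by (rule integral_mono_AE[OF int1 int2]) (use AE fL in \<open>auto\<close>)
  also have "\<dots> = L \<mu>"
    unfolding L_def using Qi Qm
    by (simp add: integral_diff integrable_inner_right prob_space)
  finally show "(LINT \<zeta>:Xi|Q. f \<zeta>) \<le> f \<mu> + e" using Lmu by simp
qed


lemma INF_diff_le:
  fixes a b :: "'x \<Rightarrow> real"
  assumes "S \<noteq> {}" "bdd_below (a ` S)" "bdd_below (b ` S)" "\<forall>y\<in>S. \<bar>a y - b y\<bar> \<le> c"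
  shows "\<bar>(INF y\<in>S. a y) - (INF y\<in>S. b y)\<bar> \<le> c"
proof -
  have 1: "(INF y\<in>S. a y) - c \<le> (INF y\<in>S. b y)"
  proof (rule cINF_greatest[OF assms(1)])
    fix y assume y: "y \<in> S"
    have "(INF y\<in>S. a y) \<le> a y" by (rule cINF_lower[OF assms(2) y])
    then show "(INF y\<in>S. a y) - c \<le> b y" using assms(4) y by force
  qed
  have 2: "(INF y\<in>S. b y) - c \<le> (INF y\<in>S. a y)"
  proof (rule cINF_greatest[OF assms(1)])
    fix y assume y: "y \<in> S"
    have "(INF y\<in>S. b y) \<le> b y" by (rule cINF_lower[OF assms(3) y])
    then show "(INF y\<in>S. b y) - c \<le> a y" using assms(4) y by force
  qed
  show ?thesis using 1 2 by linarith
qed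

theorem theorem1:
  fixes X :: "'a::euclidean_space set" and Xi :: "'b::euclidean_space set"
    and \<beta> :: real and \<phi> :: "'a \<Rightarrow> 'a \<Rightarrow> 'b \<Rightarrow> real" and Y :: "'a \<Rightarrow> 'b \<Rightarrow> 'a set"
    and N :: nat and xs :: "nat \<Rightarrow> 'b" and \<mu> :: 'b and P :: "'b measure set"
  assumes X: "closed X" "convex X"
    and Xi: "closed Xi" "convex Xi"
    and beta: "0 < \<beta>" "\<beta> < 1"
    and phi_cont: "continuous_on (X \<times> X \<times> Xi) (\<lambda>(x, y, \<xi>). \<phi> x y \<xi>)"
    and phi_bdd: "bounded ((\<lambda>(x, y, \<xi>). \<phi> x y \<xi>) ` (X \<times> X \<times> Xi))"
    and Y_sub: "\<And>x \<xi>. x \<in> X \<Longrightarrow> \<xi> \<in> Xi \<Longrightarrow> Y x \<xi> \<subseteq> X"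
    and Y_ne: "\<And>x \<xi>. x \<in> X \<Longrightarrow> \<xi> \<in> Xi \<Longrightarrow> Y x \<xi> \<noteq> {}"
    and Y_compact: "\<And>x \<xi>. x \<in> X \<Longrightarrow> \<xi> \<in> Xi \<Longrightarrow> compact (Y x \<xi>)"
    and Y_cont: "continuous_corr_on (X \<times> Xi) (\<lambda>(x, \<xi>). Y x \<xi>)"
    and N: "N \<ge> 1"
    and xs: "\<And>i. i \<in> {1..N} \<Longrightarrow> xs i \<in> Xi"
    and mu: "\<mu> = (1 / real N) *\<^sub>R (\<Sum>i=1..N. xs i)"
    and P_prob: "\<And>Q. Q \<in> P \<Longrightarrow> prob_on Xi Q"
    and P_mean: "\<And>Q. Q \<in> P \<Longrightarrow> integrable Q (\<lambda>\<xi>. \<xi>) \<and> (\<integral>\<xi>. \<xi> \<partial>Q) = \<mu>"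
    and P_dirac: "return borel \<mu> \<in> P"
    and cp: "concavity_preserving X Xi \<phi> Y \<beta> \<mu>"
  shows "\<exists>v \<in> Cb (X \<times> Xi).
           (\<forall>x\<in>X. \<forall>\<xi>\<in>Xi. v (x, \<xi>) =
              (INF y\<in>Y x \<xi>. \<phi> x y \<xi> + \<beta> * (SUP Q\<in>P. (LINT \<zeta>:Xi|Q. v (y, \<zeta>))))) \<and>
           (\<forall>x\<in>X. \<forall>\<xi>\<in>Xi. v (x, \<xi>) = (INF y\<in>Y x \<xi>. \<phi> x y \<xi> + \<beta> * v (y, \<mu>))) \<and>
           (\<forall>w \<in> Cb (X \<times> Xi).
              (\<forall>x\<in>X. \<forall>\<xi>\<in>Xi. w (x, \<xi>) = (INF y\<in>Y x \<xi>. \<phi> x y \<xi> + \<beta> * w (y, \<mu>)))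
              \<longrightarrow> (\<forall>p\<in>X \<times> Xi. w p = v p))"
  proof -
  define D where "D = X \<times> Xi"
  have mu_in: "\<mu> \<in> Xi"
  proof -
    have "(\<Sum>i\<in>{1..N}. (1 / real N) *\<^sub>R xs i) \<in> Xi"
      using N xs by (intro convex_sum[OF _ Xi(2)]) auto
    then show ?thesis by (simp add: mu scaleR_sum_right)
  qed
  obtain F where F: "F \<noteq> {}" "closed_Cb D F" "\<forall>f\<in>F. \<forall>x\<in>X. concave_on Xi (\<lambda>\<xi>. f (x, \<xi>))"
    "\<forall>f\<in>F. \<exists>g\<in>F. \<forall>p\<in>D. g p = BM \<phi> Y \<beta> \<mu> f p"
    using cp unfolding concavity_preserving_def D_def by blast
  have FCb: "F \<subseteq> Cb D" using F(2) by (simp add: closed_Cb_def)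
  obtain K\<phi> where K\<phi>: "\<And>x y \<xi>. x \<in> X \<Longrightarrow> y \<in> X \<Longrightarrow> \<xi> \<in> Xi \<Longrightarrow> \<bar>\<phi> x y \<xi>\<bar> \<le> K\<phi>"
    using phi_bdd unfolding bounded_iff by force
  have bndCb: "\<exists>K. \<forall>q\<in>D. \<bar>f q\<bar> \<le> K" if "f \<in> Cb D" for f
    using that unfolding Cb_def bounded_iff by force
  have BMeq: "BM \<phi> Y \<beta> \<mu> f (x, \<xi>) = (INF y\<in>Y x \<xi>. \<phi> x y \<xi> + \<beta> * f (y, \<mu>))" for f x \<xi>
    by (simp add: BM_def)
  have bddb: "bdd_below ((\<lambda>y. \<phi> x y \<xi> + \<beta> * f (y, \<mu>)) ` Y x \<xi>)"
    if fC: "f \<in> Cb D" and "x \<in> X" "\<xi> \<in> Xi" for f x \<xi>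
  proof -
    obtain K where K: "\<forall>q\<in>D. \<bar>f q\<bar> \<le> K" using bndCb[OF fC] by blast
    have "- K\<phi> - \<beta> * K \<le> \<phi> x y \<xi> + \<beta> * f (y, \<mu>)" if y: "y \<in> Y x \<xi>" for y
    proof -
      have yX: "y \<in> X" using Y_sub[OF \<open>x \<in> X\<close> \<open>\<xi> \<in> Xi\<close>] y by blast
      have "\<bar>f (y, \<mu>)\<bar> \<le> K" using K yX mu_in by (auto simp: D_def)
      then have "- K \<le> f (y, \<mu>)" by linarith
      then have "\<beta> * (- K) \<le> \<beta> * f (y, \<mu>)" using beta by (intro mult_left_mono) auto
      moreover have "- K\<phi> \<le> \<phi> x y \<xi>" using K\<phi>[OF \<open>x \<in> X\<close> yX \<open>\<xi> \<in> Xi\<close>] by linarith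
      ultimately show ?thesis by simp
    qed
    then show ?thesis by (intro bdd_belowI2) auto
  qed
  have contr: "\<bar>BM \<phi> Y \<beta> \<mu> f p - BM \<phi> Y \<beta> \<mu> g p\<bar> \<le> \<beta> * e"
    if cf: "f \<in> Cb D" and cg: "g \<in> Cb D" and ch: "\<forall>q\<in>D. \<bar>f q - g q\<bar> \<le> e" and cp: "p \<in> D" for f g e p
  proof -
    obtain x \<xi> where p: "p = (x, \<xi>)" "x \<in> X" "\<xi> \<in> Xi" using cp by (auto simp: D_def)
    have "\<bar>(INF y\<in>Y x \<xi>. \<phi> x y \<xi> + \<beta> * f (y, \<mu>)) - (INF y\<in>Y x \<xi>. \<phi> x y \<xi> + \<beta> * g (y, \<mu>))\<bar> \<le> \<beta> * e"
    proof (rule INF_diff_le[OF Y_ne[OF p(2,3)] bddb[OF cf p(2,3)] bddb[OF cg p(2,3)]], intro ballI)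
      fix y assume y: "y \<in> Y x \<xi>"
      have yX: "y \<in> X" using Y_sub[OF p(2,3)] y by blast
      have "\<bar>f (y, \<mu>) - g (y, \<mu>)\<bar> \<le> e" using ch yX mu_in by (auto simp: D_def)
      then have "\<beta> * \<bar>f (y, \<mu>) - g (y, \<mu>)\<bar> \<le> \<beta> * e" using beta by (intro mult_left_mono) auto
      then show "\<bar>\<phi> x y \<xi> + \<beta> * f (y, \<mu>) - (\<phi> x y \<xi> + \<beta> * g (y, \<mu>))\<bar> \<le> \<beta> * e"
        using beta by (simp add: abs_mult right_diff_distrib[symmetric])
    qed
    then show ?thesis by (simp add: p BMeq)
  qed
  define T where "T f = (SOME g. g \<in> F \<and> (\<forall>p\<in>D. g p = BM \<phi> Y \<beta> \<mu> f p))" for f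
  have T: "T f \<in> F \<and> (\<forall>p\<in>D. T f p = BM \<phi> Y \<beta> \<mu> f p)" if "f \<in> F" for f
  proof -
    have "\<exists>g. g \<in> F \<and> (\<forall>p\<in>D. g p = BM \<phi> Y \<beta> \<mu> f p)" using F(4) that by blast
    then show ?thesis unfolding T_def by (rule someI_ex)
  qed
  obtain f0 where f0: "f0 \<in> F" using F(1) by blast
  define fs where "fs k = (T ^^ k) f0" for k
  have fsF: "fs k \<in> F" for k by (induction k) (auto simp: fs_def f0 T)
  have fsCb: "fs k \<in> Cb D" for k using fsF FCb by blast
  have fsS: "\<forall>p\<in>D. fs (Suc k) p = BM \<phi> Y \<beta> \<mu> (fs k) p" for k
    using T[OF fsF[of k]] by (simp add: fs_def)
  obtain K0 where K0: "\<forall>q\<in>D. \<bar>fs 0 q\<bar> \<le> K0" using bndCb[OF fsCb] by blast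
  obtain K1 where K1: "\<forall>q\<in>D. \<bar>fs 1 q\<bar> \<le> K1" using bndCb[OF fsCb] by blast
  define M0 where "M0 = K1 + K0"
  have step: "\<forall>q\<in>D. \<bar>fs (Suc k) q - fs k q\<bar> \<le> \<beta> ^ k * M0" for k
  proof (induction k)
    case 0
    show ?case
    proof
      fix q assume q: "q \<in> D"
      have "\<bar>fs 1 q\<bar> \<le> K1" "\<bar>fs 0 q\<bar> \<le> K0" using K0 K1 q by auto
      then show "\<bar>fs (Suc 0) q - fs 0 q\<bar> \<le> \<beta> ^ 0 * M0" unfolding M0_def by simp
    qed
  next
    case (Suc k)
    show ?case
    proof
      fix q assume q: "q \<in> D"
      have "\<bar>BM \<phi> Y \<beta> \<mu> (fs (Suc k)) q - BM \<phi> Y \<beta> \<mu> (fs k) q\<bar> \<le> \<beta> * (\<beta> ^ k * M0)"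
        by (rule contr[OF fsCb fsCb Suc q])
      then show "\<bar>fs (Suc (Suc k)) q - fs (Suc k) q\<bar> \<le> \<beta> ^ Suc k * M0"
        using fsS[of "Suc k"] fsS[of k] q by simp
    qed
  qed
  define h where "h i x = (if i = 0 then fs 0 x else fs i x - fs (i - 1) x)" for i x
  define Mb where "Mb i = (if i = 0 then K0 else \<beta> ^ (i - 1) * M0)" for i
  have hb: "norm (h i x) \<le> Mb i" if "x \<in> D" for i x
    using that K0 step[of "i - 1"] by (cases i) (auto simp: h_def Mb_def)
  have sMb: "summable Mb"
  proof -
    have "summable (\<lambda>n. \<beta> ^ n * M0)" using beta by (intro summable_mult2 summable_geometric) auto
    then have "summable (\<lambda>n. Mb (Suc n))" by (simp add: Mb_def)
    then show ?thesis by (simp add: summable_Suc_iff)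
  qed
  define v where "v x = suminf (\<lambda>i. h i x)" for x
  have ul0: "uniform_limit D (\<lambda>n x. \<Sum>i<n. h i x) v sequentially"
    unfolding v_def by (rule Weierstrass_m_test[OF hb sMb])
  have tel: "(\<lambda>x. \<Sum>i<Suc n. h i x) = fs n" for n
  proof
    fix x show "(\<Sum>i<Suc n. h i x) = fs n x" by (induction n) (auto simp: h_def)
  qed
  have ul: "uniform_limit D fs v sequentially"
  proof -
    have "filterlim (\<lambda>n. (\<lambda>x. \<Sum>i<Suc n. h i x)) (uniformly_on D v) sequentially"
      by (rule iffD2[OF filterlim_sequentially_Suc[of "\<lambda>n x. \<Sum>i<n. h i x"] ul0])
    then show ?thesis by (simp only: tel)
  qed
  have vc: "continuous_on D v"
    by (rule uniform_limit_theorem[OF _ ul]) (use fsCb in \<open>auto simp: Cb_def\<close>)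
  have vb: "bounded (v ` D)"
  proof -
    have "\<forall>\<^sub>F n in sequentially. \<forall>x\<in>D. dist (fs n x) (v x) < 1"
      using ul[unfolded uniform_limit_iff, rule_format, of 1] by simp
    then obtain n0 where n0: "\<forall>m\<ge>n0. \<forall>x\<in>D. dist (fs m x) (v x) < 1"
      unfolding eventually_sequentially by blast
    define n where "n = n0"
    have n: "\<forall>x\<in>D. dist (fs n x) (v x) < 1" using n0 unfolding n_def by blast
    obtain Kn where Kn: "\<forall>q\<in>D. \<bar>fs n q\<bar> \<le> Kn" using bndCb[OF fsCb] by blast
    have "\<forall>x\<in>D. norm (v x) \<le> Kn + 1"
    proof
      fix x assume x: "x \<in> D"
      have "\<bar>fs n x - v x\<bar> < 1" "\<bar>fs n x\<bar> \<le> Kn" using n Kn x by (auto simp: dist_real_def)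
      then show "norm (v x) \<le> Kn + 1" by simp
    qed
    then show ?thesis unfolding bounded_iff by blast
  qed
  have vCb: "v \<in> Cb D" using vc vb by (simp add: Cb_def)
  have vF: "v \<in> F"
  proof -
    have "\<forall>fs f. (\<forall>k. fs k \<in> F) \<longrightarrow> f \<in> Cb D \<longrightarrow> uniform_limit D fs f sequentially \<longrightarrow> f \<in> F"
      using F(2) by (simp add: closed_Cb_def)
    then show ?thesis using fsF vCb ul by blast
  qed
  have vconc: "concave_on Xi (\<lambda>\<xi>. v (x, \<xi>))" if "x \<in> X" for x using F(3) vF that by blast
  have vfix: "v p = BM \<phi> Y \<beta> \<mu> v p" if p: "p \<in> D" for p
  proof -
    have "\<bar>v p - BM \<phi> Y \<beta> \<mu> v p\<bar> \<le> 0"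
    proof (rule field_le_epsilon)
      fix e :: real assume e: "0 < e"
      have "\<forall>\<^sub>F n in sequentially. \<forall>x\<in>D. dist (fs n x) (v x) < e / 2"
        using ul[unfolded uniform_limit_iff, rule_format, of "e / 2"] e by simp
      then obtain n where n: "\<forall>m\<ge>n. \<forall>x\<in>D. dist (fs m x) (v x) < e / 2"
        unfolding eventually_sequentially by blast
      have a: "\<forall>q\<in>D. \<bar>fs n q - v q\<bar> \<le> e / 2"
      proof
        fix q assume "q \<in> D"
        then have "dist (fs n q) (v q) < e / 2" using n by blast
        then show "\<bar>fs n q - v q\<bar> \<le> e / 2" by (simp add: dist_real_def)
      qed
      have "Suc n \<ge> n" by simp
      then have "dist (fs (Suc n) p) (v p) < e / 2" using n p by blast
      then have b: "\<bar>fs (Suc n) p - v p\<bar> \<le> e / 2" by (simp add: dist_real_def)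
      have c: "\<bar>BM \<phi> Y \<beta> \<mu> (fs n) p - BM \<phi> Y \<beta> \<mu> v p\<bar> \<le> \<beta> * (e / 2)"
        by (rule contr[OF fsCb vCb a p])
      have "\<beta> * (e / 2) \<le> e / 2" using beta e by simp
      moreover have "fs (Suc n) p = BM \<phi> Y \<beta> \<mu> (fs n) p" using fsS[of n] p by blast
      ultimately show "\<bar>v p - BM \<phi> Y \<beta> \<mu> v p\<bar> \<le> 0 + e" using b c by linarith
    qed
    then show ?thesis by simp
  qed
  have vM: "\<forall>x\<in>X. \<forall>\<xi>\<in>Xi. v (x, \<xi>) = (INF y\<in>Y x \<xi>. \<phi> x y \<xi> + \<beta> * v (y, \<mu>))"
    using vfix by (simp add: D_def BMeq)
  have uniq: "\<forall>p\<in>X \<times> Xi. w p = v p"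
    if wCb: "w \<in> Cb (X \<times> Xi)" and weq: "\<forall>x\<in>X. \<forall>\<xi>\<in>Xi. w (x, \<xi>) = (INF y\<in>Y x \<xi>. \<phi> x y \<xi> + \<beta> * w (y, \<mu>))" for w
  proof
    fix q assume q: "q \<in> X \<times> Xi"
    have wCb': "w \<in> Cb D" using wCb by (simp add: D_def)
    have wfix: "w p = BM \<phi> Y \<beta> \<mu> w p" if "p \<in> D" for p
      using weq that by (auto simp: D_def BMeq)
    obtain Kw where Kw: "\<forall>q\<in>D. \<bar>w q\<bar> \<le> Kw" using bndCb[OF wCb'] by blast
    obtain Kv where Kv: "\<forall>q\<in>D. \<bar>v q\<bar> \<le> Kv" using bndCb[OF vCb] by blast
    have it: "\<forall>q\<in>D. \<bar>w q - v q\<bar> \<le> \<beta> ^ n * (Kw + Kv)" for n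
    proof (induction n)
      case 0
      show ?case
      proof
        fix q assume q: "q \<in> D"
        have "\<bar>w q\<bar> \<le> Kw" "\<bar>v q\<bar> \<le> Kv" using Kw Kv q by auto
        then show "\<bar>w q - v q\<bar> \<le> \<beta> ^ 0 * (Kw + Kv)" by simp
      qed
    next
      case (Suc n)
      show ?case
      proof
        fix q assume q: "q \<in> D"
        have "\<bar>BM \<phi> Y \<beta> \<mu> w q - BM \<phi> Y \<beta> \<mu> v q\<bar> \<le> \<beta> * (\<beta> ^ n * (Kw + Kv))"
          by (rule contr[OF wCb' vCb Suc q])
        then show "\<bar>w q - v q\<bar> \<le> \<beta> ^ Suc n * (Kw + Kv)" using wfix[OF q] vfix[OF q] by simp
      qed
    qed
    have lim: "(\<lambda>n. \<beta> ^ n * (Kw + Kv)) \<longlonglongrightarrow> 0"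
      using beta by (intro tendsto_mult_left_zero LIMSEQ_power_zero) auto
    have "\<bar>w q - v q\<bar> \<le> 0"
      by (rule LIMSEQ_le_const[OF lim]) (use it q in \<open>auto simp: D_def\<close>)
    then show "w q = v q" by simp
  qed
  have supeq: "(SUP Q\<in>P. (LINT \<zeta>:Xi|Q. v (y, \<zeta>))) = v (y, \<mu>)" if yX: "y \<in> X" for y
  proof -
    have sub: "(\<lambda>\<zeta>. (y, \<zeta>)) ` Xi \<subseteq> D" using yX by (auto simp: D_def)
    have vyc: "continuous_on Xi (\<lambda>\<zeta>. v (y, \<zeta>))"
      by (rule continuous_on_compose2[OF vc continuous_on_Pair[OF continuous_on_const continuous_on_id] sub])
    have vyb: "bounded ((\<lambda>\<zeta>. v (y, \<zeta>)) ` Xi)"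
      by (rule bounded_subset[OF vb]) (use sub in blast)
    have meas: "(\<lambda>\<zeta>. indicator Xi \<zeta> *\<^sub>R v (y, \<zeta>)) \<in> borel_measurable borel"
      using borel_measurable_continuous_on_indicator[OF _ vyc] Xi(1) by simp
    have ret: "(LINT \<zeta>:Xi|return borel \<mu>. v (y, \<zeta>)) = v (y, \<mu>)"
      unfolding set_lebesgue_integral_def
      using integral_return[of \<mu> borel "\<lambda>\<zeta>. indicator Xi \<zeta> *\<^sub>R v (y, \<zeta>)", OF _ meas] mu_in
      by simp
    show ?thesis
    proof (rule cSup_eq_maximum)
      show "v (y, \<mu>) \<in> (\<lambda>Q. LINT \<zeta>:Xi|Q. v (y, \<zeta>)) ` P"
        by (rule image_eqI[where f="\<lambda>Q. LINT \<zeta>:Xi|Q. v (y, \<zeta>)", OF ret[symmetric] P_dirac])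
    next
      fix r assume "r \<in> (\<lambda>Q. LINT \<zeta>:Xi|Q. v (y, \<zeta>)) ` P"
      then obtain Q where Q: "Q \<in> P" "r = (LINT \<zeta>:Xi|Q. v (y, \<zeta>))" by blast
      have Pm: "integrable Q (\<lambda>\<xi>. \<xi>)" "(\<integral>\<xi>. \<xi> \<partial>Q) = \<mu>"
        using P_mean[OF Q(1)] by simp_all
      show "r \<le> v (y, \<mu>)" unfolding Q(2)
        by (rule jensen_concave[OF Xi vyc vyb vconc[OF yX] mu_in P_prob[OF Q(1)] Pm])
    qed
  qed
  have vR: "\<forall>x\<in>X. \<forall>\<xi>\<in>Xi. v (x, \<xi>) =
              (INF y\<in>Y x \<xi>. \<phi> x y \<xi> + \<beta> * (SUP Q\<in>P. (LINT \<zeta>:Xi|Q. v (y, \<zeta>))))"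
  proof (intro ballI)
    fix x \<xi> assume x: "x \<in> X" and \<xi>: "\<xi> \<in> Xi"
    have "(INF y\<in>Y x \<xi>. \<phi> x y \<xi> + \<beta> * (SUP Q\<in>P. (LINT \<zeta>:Xi|Q. v (y, \<zeta>))))
          = (INF y\<in>Y x \<xi>. \<phi> x y \<xi> + \<beta> * v (y, \<mu>))"
    proof (rule INF_cong[OF refl])
      fix y assume "y \<in> Y x \<xi>"
      then have "y \<in> X" using Y_sub[OF x \<xi>] by blast
      then show "\<phi> x y \<xi> + \<beta> * (SUP Q\<in>P. (LINT \<zeta>:Xi|Q. v (y, \<zeta>))) = \<phi> x y \<xi> + \<beta> * v (y, \<mu>)"
        by (simp only: supeq)
    qed
    then show "v (x, \<xi>) = (INF y\<in>Y x \<xi>. \<phi> x y \<xi> + \<beta> * (SUP Q\<in>P. (LINT \<zeta>:Xi|Q. v (y, \<zeta>))))"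
      using vM x \<xi> by simp
  qed
  have vCb': "v \<in> Cb (X \<times> Xi)" using vCb by (simp add: D_def)
  show ?thesis
  proof (rule bexI[OF _ vCb'], intro conjI)
    show "\<forall>w\<in>Cb (X \<times> Xi). (\<forall>x\<in>X. \<forall>\<xi>\<in>Xi. w (x, \<xi>) = (INF y\<in>Y x \<xi>. \<phi> x y \<xi> + \<beta> * w (y, \<mu>)))
              \<longrightarrow> (\<forall>p\<in>X \<times> Xi. w p = v p)"
      using uniq by blast
  qed (fact vR, fact vM)
qed

end
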